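(* Let $n\ge 2$ and consider the asynchronous $(n,k)$ game on the complete graph with agent set $[n]=\{1,\dots,n\}$ consisting of $n_r$ rejectors and $n-n_r$ random followers, where the threshold satisfies $k\le n-n_r$. Then the probability that a decision is made in finite time, i.e. $P\big(\exists\, t\ge 0:\ \sum_{i\in[n]}x_i(t)\ge k\big)$, is at most $\dfrac{n-n_r}{2k}$.
   Context: Each agent $i\in[n]$ holds an opinion $x_i(t)\in\{0,1\}$ at time $t=0,1,2,\dots$. The social graph is complete: every agent's social neighbors are all the other $n-1$ agents. In the $(n,k)$ game a decision is made at time $t$ if $\sum_{i\in[n]}x_i(t)\ge k$. The game is asynchronous: at each time step a single agent, chosen uniformly at random from $[n]$ (independently of the past), updates its opinion, and all other opinions stay the same. A rejector holds opinion $0$ at all times. A random follower has initial opinion distributed as Bernoulli$(1/2)$ (independently across agents), and when it updates it adopts the current opinion of one of its social neighbors chosen uniformly at random. *)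

theory Defs
  imports "HOL-Probability.Probability"
begin

(* Agents are 0..n-1; opinion 1 is True, 0 is False. R is the set of rejectors. *)

definition init_pmf :: "nat \<Rightarrow> nat set \<Rightarrow> (nat \<Rightarrow> bool) pmf" where
  "init_pmf n R = Pi_pmf {..<n} False
      (\<lambda>i. if i \<in> R then return_pmf False else bernoulli_pmf (1/2))"

(* one asynchronous step: a uniformly random updating agent i and, independently given i,
   a uniformly random social neighbour j (any other agent): uniform on ordered distinct pairs *)
definition step_pmf :: "nat \<Rightarrow> (nat \<times> nat) pmf" where
  "step_pmf n = pmf_of_set {(i, j). i < n \<and> j < n \<and> j \<noteq> i}"

definition update :: "nat set \<Rightarrow> (nat \<Rightarrow> bool) \<Rightarrow> nat \<times> nat \<Rightarrow> (nat \<Rightarrow> bool)" where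
  "update R x s = (let (i, j) = s in if i \<in> R then x(i := False) else x(i := x j))"

primrec traj :: "nat set \<Rightarrow> (nat \<Rightarrow> bool) \<Rightarrow> (nat \<times> nat) stream \<Rightarrow> nat \<Rightarrow> (nat \<Rightarrow> bool)" where
  "traj R x0 \<omega> 0 = x0"
| "traj R x0 \<omega> (Suc t) = update R (traj R x0 \<omega> t) (\<omega> !! t)"

definition ones :: "nat \<Rightarrow> (nat \<Rightarrow> bool) \<Rightarrow> nat" where
  "ones n x = (\<Sum>i<n. if x i then 1 else 0)"

definition game_space :: "nat \<Rightarrow> nat set \<Rightarrow> ((nat \<Rightarrow> bool) \<times> (nat \<times> nat) stream) measure" where
  "game_space n R = measure_pmf (init_pmf n R) \<Otimes>\<^sub>M stream_space (measure_pmf (step_pmf n))"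

definition decision_event :: "nat \<Rightarrow> nat set \<Rightarrow> nat \<Rightarrow> ((nat \<Rightarrow> bool) \<times> (nat \<times> nat) stream) set" where
  "decision_event n R k = {(x0, \<omega>) \<in> space (game_space n R). \<exists>t. ones n (traj R x0 \<omega> t) \<ge> k}"

end

theory Submission
  imports Defs
begin

definition ind :: "bool \<Rightarrow> real" where "ind b = (if b then 1 else 0)"

lemma ones_real: "real (ones n x) = (\<Sum>i<n. ind (x i))"
  unfolding ones_def ind_def of_nat_sum by (intro sum.cong) auto

lemma ones_upd: assumes "i < n"
  shows "real (ones n (x(i := b))) = real (ones n x) - ind (x i) + ind b"
proof -
  have "real (ones n (x(i := b))) = ind b + (\<Sum>l\<in>{..<n}-{i}. ind (x l))"
    unfolding ones_real using assms by (subst sum.remove[of _ i]) auto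
  moreover have "real (ones n x) = ind (x i) + (\<Sum>l\<in>{..<n}-{i}. ind (x l))"
    unfolding ones_real using assms by (subst sum.remove[of _ i]) auto
  ultimately show ?thesis by simp
qed

lemma ones_update_le: assumes "i < n"
  shows "real (ones n (update R x (i, j))) \<le> real (ones n x) - ind (x i) + ind (x j)"
proof (cases "i \<in> R")
  case True
  then show ?thesis using ones_upd[OF assms, of x False] by (simp add: update_def ind_def)
next
  case False
  then show ?thesis using ones_upd[OF assms, of x "x j"] by (simp add: update_def)
qed

definition pairs :: "nat \<Rightarrow> (nat \<times> nat) set" where
  "pairs n = {(i, j). i < n \<and> j < n \<and> j \<noteq> i}"

lemma finite_pairs: "finite (pairs n)"
  by (rule finite_subset[of _ "{..<n} \<times> {..<n}"]) (auto simp: pairs_def)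

lemma pairs_ne: "n \<ge> 2 \<Longrightarrow> pairs n \<noteq> {}"
proof -
  assume "n \<ge> 2"
  hence "(1, 0) \<in> pairs n" by (auto simp: pairs_def)
  thus ?thesis by blast
qed

lemma sum_swap_pairs: "(\<Sum>s\<in>pairs n. f (fst s)) = (\<Sum>s\<in>pairs n. (f (snd s) :: real))"
  by (rule sum.reindex_bij_witness[of _ prod.swap prod.swap]) (auto simp: pairs_def)

lemma sum_pairs_le: "(\<Sum>s\<in>pairs n. real (ones n (update R x s))) \<le> real (card (pairs n)) * real (ones n x)"
proof -
  have "(\<Sum>s\<in>pairs n. real (ones n (update R x s))) \<le>
        (\<Sum>s\<in>pairs n. real (ones n x) - ind (x (fst s)) + ind (x (snd s)))"
    by (rule sum_mono) (auto simp: pairs_def intro!: ones_update_le)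
  also have "\<dots> = real (card (pairs n)) * real (ones n x)"
    using sum_swap_pairs[of "\<lambda>i. ind (x i)" n] by (simp add: sum.distrib sum_subtractf)
  finally show ?thesis .
qed

lemma expect_step: assumes "n \<ge> 2"
  shows "measure_pmf.expectation (step_pmf n) (\<lambda>s. real (ones n (update R x s))) \<le> real (ones n x)"
proof -
  have "step_pmf n = pmf_of_set (pairs n)" by (simp add: step_pmf_def pairs_def)
  hence "measure_pmf.expectation (step_pmf n) (\<lambda>s. real (ones n (update R x s)))
     = (\<Sum>s\<in>pairs n. real (ones n (update R x s))) / card (pairs n)"
    using finite_pairs pairs_ne[OF assms] by (simp add: integral_pmf_of_set)
  also have "\<dots> \<le> real (ones n x)"
    using sum_pairs_le[of n R x] finite_pairs pairs_ne[OF assms]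
    by (simp add: divide_le_eq card_gt_0_iff mult.commute)
  finally show ?thesis .
qed

lemma traj_Cons: "traj R x (s ## \<omega>) (Suc t) = traj R (update R x s) \<omega> t"
  by (induction t) auto

definition trajL :: "nat set \<Rightarrow> (nat \<Rightarrow> bool) \<Rightarrow> (nat \<times> nat) list \<Rightarrow> (nat \<Rightarrow> bool)" where
  "trajL R x l = fold (\<lambda>s y. update R y s) l x"

lemma traj_trajL: "traj R x \<omega> t = trajL R x (stake t \<omega>)"
  by (induction t) (simp_all del: stake.simps add: trajL_def stake_Suc stake.simps(1))

abbreviation SS :: "nat \<Rightarrow> (nat \<times> nat) stream measure" where
  "SS n \<equiv> stream_space (measure_pmf (step_pmf n))"

lemma space_SS[simp]: "space (SS n) = UNIV"
  by (simp add: space_stream_space)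

lemma stake_meas: "stake t \<in> measurable (SS n) (count_space UNIV)"
proof -
  have "sets (SS n) = sets (stream_space (count_space UNIV))"
    by (rule sets_stream_space_cong) simp
  hence "measurable (SS n) (count_space UNIV) = measurable (stream_space (count_space UNIV)) (count_space (UNIV::(nat\<times>nat) list set))"
    by (rule measurable_cong_sets) simp
  thus ?thesis using measurable_stake by simp
qed

lemma meas_pair: "(\<lambda>p. k \<le> ones n (traj R (fst p) (snd p) t))
   \<in> measurable (measure_pmf p \<Otimes>\<^sub>M SS n) (count_space UNIV)"
proof -
  have "(\<lambda>q. (\<lambda>l q. k \<le> ones n (trajL R (fst q) l)) (stake t (snd q)) q)
     \<in> measurable (measure_pmf p \<Otimes>\<^sub>M SS n) (count_space UNIV)"
    by (rule measurable_compose_countable'[where I=UNIV])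
       (auto intro!: measurable_compose[OF measurable_snd stake_meas] measurable_compose[OF measurable_fst])
  thus ?thesis by (simp add: traj_trajL)
qed

lemma meas_single: "(\<lambda>\<omega>. k \<le> ones n (traj R x \<omega> t)) \<in> measurable (SS n) (count_space UNIV)"
proof -
  have "(\<lambda>\<omega>. (\<lambda>l \<omega>. k \<le> ones n (trajL R x l)) (stake t \<omega>) \<omega>)
     \<in> measurable (SS n) (count_space UNIV)"
    by (rule measurable_compose_countable'[where I=UNIV]) (auto intro: stake_meas)
  thus ?thesis by (simp add: traj_trajL)
qed

lemma sets_hit: "{\<omega>. \<exists>t\<le>T. k \<le> ones n (traj R x \<omega> t)} \<in> sets (SS n)"
proof -
  have "{\<omega>. \<exists>t\<le>T. k \<le> ones n (traj R x \<omega> t)} = (\<Union>t\<in>{..T}. (\<lambda>\<omega>. k \<le> ones n (traj R x \<omega> t)) -` {True} \<inter> space (SS n))"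
    by auto
  also have "\<dots> \<in> sets (SS n)"
    using meas_single by (intro sets.finite_UN) (auto simp: measurable_def)
  finally show ?thesis .
qed

lemma prob_SS: "prob_space (SS n)"
  by (rule prob_space.prob_space_stream_space) (rule measure_pmf.prob_space_axioms)

lemma hit_bound:
  assumes n: "n \<ge> 2" and k: "k \<ge> 1"
  shows "emeasure (SS n) {\<omega>. \<exists>t\<le>T. k \<le> ones n (traj R x \<omega> t)} \<le> ennreal (real (ones n x) / real k)"
proof (induction T arbitrary: x)
  case 0
  show ?case
  proof (cases "k \<le> ones n x")
    case True
    have "emeasure (SS n) {\<omega>. \<exists>t\<le>0. k \<le> ones n (traj R x \<omega> t)} \<le> 1"
      using prob_space.emeasure_le_1[OF prob_SS] .
    also have "1 \<le> ennreal (real (ones n x) / real k)"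
      using True k by simp
    finally show ?thesis .
  next
    case False
    thus ?thesis by simp
  qed
next
  case (Suc T)
  show ?case
  proof (cases "k \<le> ones n x")
    case True
    have "emeasure (SS n) {\<omega>. \<exists>t\<le>Suc T. k \<le> ones n (traj R x \<omega> t)} \<le> 1"
      using prob_space.emeasure_le_1[OF prob_SS] .
    also have "1 \<le> ennreal (real (ones n x) / real k)"
      using True k by simp
    finally show ?thesis .
  next
    case False
    let ?A = "{\<omega>. \<exists>t\<le>Suc T. k \<le> ones n (traj R x \<omega> t)}"
    let ?B = "\<lambda>y. {\<omega>. \<exists>t\<le>T. k \<le> ones n (traj R y \<omega> t)}"
    have eq: "indicator ?A (s ## \<omega>) = (indicator (?B (update R x s)) \<omega> :: ennreal)" for s \<omega>
    proof -
      have "(s ## \<omega>) \<in> ?A \<longleftrightarrow> \<omega> \<in> ?B (update R x s)"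
      proof
        assume "(s ## \<omega>) \<in> ?A"
        then obtain t where t: "t \<le> Suc T" "k \<le> ones n (traj R x (s ## \<omega>) t)" by auto
        with False obtain t' where "t = Suc t'" by (cases t) auto
        with t have "t' \<le> T" "k \<le> ones n (traj R (update R x s) \<omega> t')"
          by (metis Suc_le_mono, metis traj_Cons)
        thus "\<omega> \<in> ?B (update R x s)" by auto
      next
        assume "\<omega> \<in> ?B (update R x s)"
        then obtain t where t: "t \<le> T" "k \<le> ones n (traj R (update R x s) \<omega> t)" by auto
        thus "(s ## \<omega>) \<in> ?A" by (auto simp: traj_Cons[symmetric] intro!: exI[of _ "Suc t"])
      qed
      thus ?thesis by (simp add: indicator_def)
    qed
    have "emeasure (SS n) ?A = (\<integral>\<^sup>+\<omega>. indicator ?A \<omega> \<partial>SS n)"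
      using sets_hit by (simp add: nn_integral_indicator)
    also have "\<dots> = (\<integral>\<^sup>+s. (\<integral>\<^sup>+\<omega>. indicator ?A (s ## \<omega>) \<partial>SS n) \<partial>measure_pmf (step_pmf n))"
      by (rule prob_space.nn_integral_stream_space[OF measure_pmf.prob_space_axioms])
         (use sets_hit in simp)
    also have "\<dots> = (\<integral>\<^sup>+s. emeasure (SS n) (?B (update R x s)) \<partial>measure_pmf (step_pmf n))"
      unfolding eq using sets_hit by (simp add: nn_integral_indicator)
    also have "\<dots> \<le> (\<integral>\<^sup>+s. ennreal (real (ones n (update R x s)) / real k) \<partial>measure_pmf (step_pmf n))"
      by (rule nn_integral_mono) (rule Suc.IH)
    also have "\<dots> = ennreal (measure_pmf.expectation (step_pmf n) (\<lambda>s. real (ones n (update R x s)) / real k))"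
      by (rule nn_integral_eq_integral)
         (auto intro!: integrable_measure_pmf_finite simp: step_pmf_def pairs_def[symmetric] finite_pairs pairs_ne[OF n])
    also have "\<dots> \<le> ennreal (real (ones n x) / real k)"
      using expect_step[OF n, of R x] k by (intro ennreal_leI) (simp add: divide_right_mono)
    finally show ?thesis .
  qed
qed

lemma ones_le: "real (ones n x) \<le> real n"
proof -
  have "(\<Sum>i<n. ind (x i)) \<le> (\<Sum>i<n. 1)" by (rule sum_mono) (simp add: ind_def)
  thus ?thesis by (simp add: ones_real)
qed

lemma expect_init:
  assumes "R \<subseteq> {..<n}" "card R = nr"
  shows "measure_pmf.expectation (init_pmf n R) (\<lambda>x. real (ones n x)) = real (n - nr) / 2"
proof -
  have int: "integrable (measure_pmf (init_pmf n R)) (\<lambda>x. ind (x i))" for i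
    by (rule measure_pmf.integrable_const_bound[where B=1]) (auto simp: ind_def)
  have comp: "measure_pmf.expectation (init_pmf n R) (\<lambda>x. ind (x i)) = (if i \<in> R then 0 else 1/2)" if "i < n" for i
  proof -
    have "measure_pmf.expectation (init_pmf n R) (\<lambda>x. ind (x i))
       = measure_pmf.expectation (map_pmf (\<lambda>x. x i) (init_pmf n R)) ind" by simp
    also have "map_pmf (\<lambda>x. x i) (init_pmf n R) = (if i \<in> R then return_pmf False else bernoulli_pmf (1/2))"
      unfolding init_pmf_def using that by (subst Pi_pmf_component) auto
    finally show ?thesis by (simp add: ind_def)
  qed
  have "measure_pmf.expectation (init_pmf n R) (\<lambda>x. real (ones n x))
      = (\<Sum>i<n. measure_pmf.expectation (init_pmf n R) (\<lambda>x. ind (x i)))"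
    unfolding ones_real by (rule Bochner_Integration.integral_sum) (rule int)
  also have "\<dots> = (\<Sum>i<n. if i \<in> R then 0 else 1/2)"
    by (rule sum.cong) (auto simp: comp)
  also have "\<dots> = (\<Sum>i\<in>{..<n} - R. 1/2)"
    by (rule sum.mono_neutral_cong_right) auto
  also have "\<dots> = real (card ({..<n} - R)) / 2" by simp
  also have "card ({..<n} - R) = n - nr"
    using assms by (simp add: card_Diff_subset finite_subset)
  finally show ?thesis .
qed

theorem theorem1:
  fixes n nr k :: nat and R :: "nat set"
  assumes "n \<ge> 2" and "R \<subseteq> {..<n}" and "card R = nr"
    and "1 \<le> k" and "k \<le> n - nr"
  shows "decision_event n R k \<in> sets (game_space n R) \<and>
         measure (game_space n R) (decision_event n R k) \<le> real (n - nr) / (2 * real k)"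
proof -
  let ?I = "measure_pmf (init_pmf n R)"
  let ?G = "game_space n R"
  have G: "?G = ?I \<Otimes>\<^sub>M SS n" by (simp add: game_space_def)
  have spG: "space ?G = UNIV" by (simp add: G space_pair_measure)
  define H where "H T = {p \<in> space ?G. \<exists>t\<le>T. k \<le> ones n (traj R (fst p) (snd p) t)}" for T
  have HS: "H T \<in> sets ?G" for T
  proof -
    have "H T = (\<Union>t\<in>{..T}. (\<lambda>p. k \<le> ones n (traj R (fst p) (snd p) t)) -` {True} \<inter> space ?G)"
      by (auto simp: H_def)
    also have "\<dots> \<in> sets ?G"
      using meas_pair[of k n R _ "init_pmf n R"] unfolding G
      by (intro sets.finite_UN) (auto simp: measurable_def)
    finally show ?thesis .
  qed
  have D: "decision_event n R k = (\<Union>T. H T)"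
    by (auto simp: decision_event_def H_def) blast
  have inc: "incseq H"
    unfolding incseq_def H_def by (auto intro: order.trans)
  have Dsets: "decision_event n R k \<in> sets ?G"
    unfolding D using HS by auto
  have sf: "sigma_finite_measure (SS n)" by (rule prob_space_imp_sigma_finite[OF prob_SS])
  have b: "real (ones n x) / real k \<le> real n" for x
  proof -
    have "real n * 1 \<le> real n * real k" using assms(4) by (intro mult_left_mono) auto
    thus ?thesis using ones_le[of n x] assms(4) by (simp add: divide_le_eq)
  qed
  have bound: "emeasure ?G (H T) \<le> ennreal (real (n - nr) / (2 * real k))" for T
  proof -
    have "emeasure ?G (H T) = (\<integral>\<^sup>+x. emeasure (SS n) (Pair x -` H T) \<partial>?I)"
      using HS[of T] unfolding G by (rule sigma_finite_measure.emeasure_pair_measure_alt[OF sf])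
    also have "\<dots> = (\<integral>\<^sup>+x. emeasure (SS n) {\<omega>. \<exists>t\<le>T. k \<le> ones n (traj R x \<omega> t)} \<partial>?I)"
      by (simp add: H_def spG)
    also have "\<dots> \<le> (\<integral>\<^sup>+x. ennreal (real (ones n x) / real k) \<partial>?I)"
      by (rule nn_integral_mono) (rule hit_bound[OF assms(1,4)])
    also have "\<dots> = ennreal (measure_pmf.expectation (init_pmf n R) (\<lambda>x. real (ones n x) / real k))"
      by (rule nn_integral_eq_integral)
         (use b in \<open>auto intro!: measure_pmf.integrable_const_bound[where B="real n"]\<close>)
    also have "\<dots> = ennreal (real (n - nr) / (2 * real k))"
    proof -
      have "measure_pmf.expectation (init_pmf n R) (\<lambda>x. real (ones n x) / real k)
          = measure_pmf.expectation (init_pmf n R) (\<lambda>x. real (ones n x)) / real k" by simp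
      also have "\<dots> = real (n - nr) / 2 / real k" by (simp only: expect_init[OF assms(2,3)])
      finally show ?thesis by simp
    qed
    finally show ?thesis .
  qed
  have "emeasure ?G (decision_event n R k) = (SUP T. emeasure ?G (H T))"
    unfolding D using HS inc by (subst SUP_emeasure_incseq) auto
  also have "\<dots> \<le> ennreal (real (n - nr) / (2 * real k))"
    by (rule SUP_least) (rule bound)
  finally have le: "emeasure ?G (decision_event n R k) \<le> ennreal (real (n - nr) / (2 * real k))" .
  have ps: "prob_space ?G" unfolding G
    by (rule prob_space_pair[OF measure_pmf.prob_space_axioms prob_SS])
  have "ennreal (measure ?G (decision_event n R k)) \<le> ennreal (real (n - nr) / (2 * real k))"
    using le by (simp add: finite_measure.emeasure_eq_measure[OF prob_space.finite_measure[OF ps]])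
  hence "measure ?G (decision_event n R k) \<le> real (n - nr) / (2 * real k)"
    by (subst (asm) ennreal_le_iff) auto
  with Dsets show ?thesis by blast
qed

end
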